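(* Let $G$ be a group, let $K$ be an uncountable algebraically closed field, and let $A$ be an affine algebraic set over $K$. Then every algebraic cellular automaton $\tau\colon A^G\to A^G$ has the closed image property: its image $\tau(A^G)$ is a closed subset of $A^G$ with respect to the prodiscrete topology.
   Context: For a group $G$ and a set $A$, $A^G$ is the set of maps $x\colon G\to A$ (configurations), with the $G$-shift $(gx)(h)=x(g^{-1}h)$. The prodiscrete topology on $A^G$ is the product topology where each factor $A$ carries the discrete topology. For $x\in A^G$ and $\Omega\subset G$, $x|_\Omega$ denotes the restriction. A cellular automaton is a map $\tau\colon A^G\to A^G$ for which there exist a finite subset $M\subset G$ (a memory set) and a map $\mu\colon A^M\to A$ (the local defining map) with $\tau(x)(g)=\mu((g^{-1}x)|_M)$ for all $x\in A^G$, $g\in G$. An affine algebraic set over a field $K$ is the common zero set in $K^m$ of a set of polynomials in $K[t_1,\dots,t_m]$; a map between affine algebraic sets $V\subset K^m$, $W\subset K^n$ is regular if it is the restriction of a polynomial map $K^m\to K^n$. For finite $M$, $A^M$ is an affine algebraic set (a finite Cartesian power of $A$). A cellular automaton $\tau\colon A^G\to A^G$ with $A$ an affine algebraic set over $K$ is algebraic if for some (equivalently any) memory set $M$ the local defining map $\mu\colon A^M\to A$ is regular. *)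

theory Defs
  imports "HOL-Analysis.Analysis" "HOL-Computational_Algebra.Polynomial"
begin

inductive_set polyfun :: "'v set \<Rightarrow> (('v \<Rightarrow> 'k::comm_ring_1) \<Rightarrow> 'k) set"
  for V :: "'v set" where
  const: "(\<lambda>_. c) \<in> polyfun V"
| var: "i \<in> V \<Longrightarrow> (\<lambda>x. x i) \<in> polyfun V"
| add: "p \<in> polyfun V \<Longrightarrow> q \<in> polyfun V \<Longrightarrow> (\<lambda>x. p x + q x) \<in> polyfun V"
| mult: "p \<in> polyfun V \<Longrightarrow> q \<in> polyfun V \<Longrightarrow> (\<lambda>x. p x * q x) \<in> polyfun V"

text \<open>Affine algebraic set in K^n, n = CARD('n): common zero set of a set of polynomials.\<close>
definition affine_algebraic_set :: "('n::finite \<Rightarrow> 'k::field) set \<Rightarrow> bool" where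
  "affine_algebraic_set A \<longleftrightarrow>
     (\<exists>S. S \<subseteq> polyfun (UNIV :: 'n set) \<and> A = {x. \<forall>f\<in>S. f x = 0})"

definition configs :: "'a set \<Rightarrow> ('g \<Rightarrow> 'a) set" where
  "configs A = {x. \<forall>g. x g \<in> A}"

text \<open>Shift: (g x)(h) = x(g^{-1} h); the group G is written additively (group_add, not
  necessarily commutative).\<close>
definition shift :: "'g::group_add \<Rightarrow> ('g \<Rightarrow> 'a) \<Rightarrow> ('g \<Rightarrow> 'a)" where
  "shift g x = (\<lambda>h. x (- g + h))"

definition memory_local_map ::
    "'a set \<Rightarrow> (('g::group_add \<Rightarrow> 'a) \<Rightarrow> ('g \<Rightarrow> 'a)) \<Rightarrow> 'g set \<Rightarrow> (('g \<Rightarrow> 'a) \<Rightarrow> 'a) \<Rightarrow> bool" where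
  "memory_local_map A \<tau> M \<mu> \<longleftrightarrow> finite M \<and> (\<forall>y\<in>PiE M (\<lambda>_. A). \<mu> y \<in> A) \<and>
     (\<forall>x\<in>configs A. \<forall>g. \<tau> x g = \<mu> (restrict (shift (- g) x) M))"

definition cellular_automaton :: "'a set \<Rightarrow> (('g::group_add \<Rightarrow> 'a) \<Rightarrow> ('g \<Rightarrow> 'a)) \<Rightarrow> bool" where
  "cellular_automaton A \<tau> \<longleftrightarrow> (\<exists>M \<mu>. memory_local_map A \<tau> M \<mu>)"

text \<open>A map mu : A^M -> A (A \<subseteq> K^'n, so A^M \<subseteq> K^(M x 'n)) is regular if it is the
  restriction of a polynomial map K^(M x 'n) -> K^'n.\<close>
definition regular_local_map ::
    "('n \<Rightarrow> 'k::field) set \<Rightarrow> 'g set \<Rightarrow> (('g \<Rightarrow> 'n \<Rightarrow> 'k) \<Rightarrow> ('n \<Rightarrow> 'k)) \<Rightarrow> bool" where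
  "regular_local_map A M \<mu> \<longleftrightarrow>
     (\<exists>P :: 'n \<Rightarrow> (('g \<times> 'n) \<Rightarrow> 'k) \<Rightarrow> 'k. (\<forall>j. P j \<in> polyfun (M \<times> UNIV)) \<and>
        (\<forall>y\<in>PiE M (\<lambda>_. A). \<mu> y = (\<lambda>j. P j (\<lambda>(h, i). y h i))))"

definition algebraic_ca ::
    "('n \<Rightarrow> 'k::field) set \<Rightarrow> (('g::group_add \<Rightarrow> 'n \<Rightarrow> 'k) \<Rightarrow> ('g \<Rightarrow> 'n \<Rightarrow> 'k)) \<Rightarrow> bool" where
  "algebraic_ca A \<tau> \<longleftrightarrow> (\<exists>M \<mu>. memory_local_map A \<tau> M \<mu> \<and> regular_local_map A M \<mu>)"

end

theory Submission
  imports Defs "HOL-Library.Function_Algebras"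
begin

definition sc :: "'k::field \<Rightarrow> ('v \<Rightarrow> 'k) \<Rightarrow> ('v \<Rightarrow> 'k)" where
  "sc c f = (\<lambda>x. c * f x)"

interpretation fvs: vector_space sc
  by unfold_locales (auto simp: sc_def fun_eq_iff algebra_simps)

lemma fun_sum_apply: "(\<Sum>a\<in>A. f a) x = (\<Sum>a\<in>A. f a x)"
  by (induct A rule: infinite_finite_induct) auto
lemma fun_prod_apply: "(\<Prod>a\<in>A. f a) x = (\<Prod>a\<in>A. f a x)"
  by (induct A rule: infinite_finite_induct) auto

lemma polyfun_const': "(\<lambda>_. c) \<in> polyfun V" by (rule polyfun.const)
lemma polyfun_plus: "p \<in> polyfun V \<Longrightarrow> q \<in> polyfun V \<Longrightarrow> p + q \<in> polyfun V"
  unfolding plus_fun_def by (rule polyfun.add)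
lemma polyfun_times: "p \<in> polyfun V \<Longrightarrow> q \<in> polyfun V \<Longrightarrow> p * q \<in> polyfun V"
  unfolding times_fun_def by (rule polyfun.mult)
lemma polyfun_one: "1 \<in> polyfun V" unfolding one_fun_def by (rule polyfun.const)
lemma polyfun_zero: "0 \<in> polyfun V" unfolding zero_fun_def by (rule polyfun.const)
lemma polyfun_uminus: "p \<in> polyfun V \<Longrightarrow> - p \<in> polyfun V"
proof -
  assume "p \<in> polyfun V"
  then have "(\<lambda>_. -1) * p \<in> polyfun V" by (intro polyfun_times polyfun.const)
  moreover have "(\<lambda>_. -1) * p = - p" by (rule ext) simp
  ultimately show ?thesis by simp
qed
lemma polyfun_minus: "p \<in> polyfun V \<Longrightarrow> q \<in> polyfun V \<Longrightarrow> p - q \<in> polyfun V"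
  using polyfun_plus[of p V "-q"] polyfun_uminus[of q V] by simp
lemma polyfun_sum: "(\<And>a. a \<in> A \<Longrightarrow> f a \<in> polyfun V) \<Longrightarrow> (\<Sum>a\<in>A. f a) \<in> polyfun V"
  by (induct A rule: infinite_finite_induct) (auto intro: polyfun_zero polyfun_plus)
lemma polyfun_prod: "(\<And>a. a \<in> A \<Longrightarrow> f a \<in> polyfun V) \<Longrightarrow> (\<Prod>a\<in>A. f a) \<in> polyfun V"
  by (induct A rule: infinite_finite_induct) (auto intro: polyfun_one polyfun_times)

lemma polyfun_poly: "r \<in> polyfun V \<Longrightarrow> (\<lambda>x. poly p (r x)) \<in> polyfun V"
proof (induct p)
  case 0 then show ?case by (simp add: polyfun.const)
next
  case (pCons a p)
  then show ?case by (auto intro!: polyfun.add polyfun.mult polyfun.const)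
qed

lemma polyfun_cong: "f \<in> polyfun U \<Longrightarrow> (\<forall>i\<in>U. a i = b i) \<Longrightarrow> f a = f b"
  by (induct f rule: polyfun.induct) auto

lemma polyfun_subst: "f \<in> polyfun U \<Longrightarrow> (\<forall>i\<in>U. q i \<in> polyfun V) \<Longrightarrow> (\<lambda>\<xi>. f (\<lambda>i. q i \<xi>)) \<in> polyfun V"
  by (induct f rule: polyfun.induct) (auto intro: polyfun.intros)



definition subr :: "'a::comm_ring_1 set \<Rightarrow> bool" where
  "subr R \<longleftrightarrow> 1 \<in> R \<and> (\<forall>a\<in>R. -a \<in> R) \<and> (\<forall>a\<in>R. \<forall>b\<in>R. a + b \<in> R \<and> a * b \<in> R)"

definition isideal :: "'a::comm_ring_1 set \<Rightarrow> 'a set \<Rightarrow> bool" where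
  "isideal R J \<longleftrightarrow> J \<subseteq> R \<and> 0 \<in> J \<and> (\<forall>a\<in>J. \<forall>b\<in>J. a + b \<in> J) \<and> (\<forall>a\<in>J. \<forall>r\<in>R. r * a \<in> J)"

definition maxid :: "'a::comm_ring_1 set \<Rightarrow> 'a set \<Rightarrow> bool" where
  "maxid R m \<longleftrightarrow> isideal R m \<and> 1 \<notin> m \<and> (\<forall>J. isideal R J \<and> m \<subseteq> J \<and> 1 \<notin> J \<longrightarrow> J = m)"

lemma subr_polyfun: "subr (polyfun V)"
  unfolding subr_def by (auto intro: polyfun_one polyfun_uminus polyfun_plus polyfun_times)

lemma subrD: assumes "subr R"
  shows "1 \<in> R" "a \<in> R \<Longrightarrow> -a \<in> R" "a \<in> R \<Longrightarrow> b \<in> R \<Longrightarrow> a + b \<in> R"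
    "a \<in> R \<Longrightarrow> b \<in> R \<Longrightarrow> a * b \<in> R" "a \<in> R \<Longrightarrow> b \<in> R \<Longrightarrow> a - b \<in> R" "0 \<in> R"
proof -
  show "1 \<in> R" using assms by (simp add: subr_def)
  show "a \<in> R \<Longrightarrow> -a \<in> R" using assms by (simp add: subr_def)
  show "a \<in> R \<Longrightarrow> b \<in> R \<Longrightarrow> a + b \<in> R" using assms by (simp add: subr_def)
  show "a \<in> R \<Longrightarrow> b \<in> R \<Longrightarrow> a * b \<in> R" using assms by (simp add: subr_def)
  show "a \<in> R \<Longrightarrow> b \<in> R \<Longrightarrow> a - b \<in> R" using assms unfolding subr_def
    by (metis diff_conv_add_uminus)
  show "0 \<in> R" using assms unfolding subr_def by (metis add.right_inverse)
qed

lemma idealD: assumes "isideal R J"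
  shows "J \<subseteq> R" "0 \<in> J" "a \<in> J \<Longrightarrow> b \<in> J \<Longrightarrow> a + b \<in> J" "a \<in> J \<Longrightarrow> r \<in> R \<Longrightarrow> r * a \<in> J"
    "a \<in> J \<Longrightarrow> r \<in> R \<Longrightarrow> a * r \<in> J"
  using assms unfolding isideal_def by (auto simp: mult.commute)

lemma ideal_neg: "subr R \<Longrightarrow> isideal R J \<Longrightarrow> a \<in> J \<Longrightarrow> -a \<in> J"
  using idealD(4)[of R J a "-1"] subrD(1,2)[of R] by simp

lemma ideal_diff: "subr R \<Longrightarrow> isideal R J \<Longrightarrow> a \<in> J \<Longrightarrow> b \<in> J \<Longrightarrow> a - b \<in> J"
  using ideal_neg[of R J b] idealD(3)[of R J a "-b"] by simp

lemma ideal_sum: "isideal R J \<Longrightarrow> (\<And>a. a \<in> A \<Longrightarrow> f a \<in> J) \<Longrightarrow> (\<Sum>a\<in>A. f a) \<in> J"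
  by (induct A rule: infinite_finite_induct) (auto intro: idealD)

lemma max_inv:
  assumes R: "subr R" and m: "maxid R m" and a: "a \<in> R" "a \<notin> m"
  shows "\<exists>s\<in>R. s * a - 1 \<in> m"
proof -
  have im: "isideal R m" using m by (simp add: maxid_def)
  define J where "J = {u + t * a | u t. u \<in> m \<and> t \<in> R}"
  have "isideal R J"
    unfolding isideal_def
  proof (intro conjI ballI)
    show "J \<subseteq> R" unfolding J_def using idealD(1)[OF im] a R
      by (auto intro: subrD)
    show "0 \<in> J" unfolding J_def using idealD(2)[OF im] subrD(6)[OF R]
      by (auto intro!: exI[of _ 0])
  next
    fix x y assume "x \<in> J" "y \<in> J"
    then obtain u t u' t' where "x = u + t * a" "y = u' + t' * a" "u \<in> m" "t \<in> R" "u' \<in> m" "t' \<in> R"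
      unfolding J_def by auto
    then show "x + y \<in> J" unfolding J_def
      by (intro CollectI exI[of _ "u + u'"] exI[of _ "t + t'"])
         (auto simp: algebra_simps intro: idealD[OF im] subrD[OF R])
  next
    fix x r assume "x \<in> J" "r \<in> R"
    then obtain u t where "x = u + t * a" "u \<in> m" "t \<in> R"
      unfolding J_def by auto
    then show "r * x \<in> J" unfolding J_def using \<open>r \<in> R\<close>
      by (intro CollectI exI[of _ "r * u"] exI[of _ "r * t"])
         (auto simp: algebra_simps intro: idealD[OF im] subrD[OF R])
  qed
  moreover have "m \<subseteq> J" unfolding J_def
  proof
    fix u assume "u \<in> m"
    moreover have "u = u + 0 * a" by simp
    ultimately show "u \<in> {u + t * a | u t. u \<in> m \<and> t \<in> R}"
      using subrD(6)[OF R] by blast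
  qed
  moreover have "a \<in> J"
  proof -
    have "a = 0 + 1 * a" by simp
    then show ?thesis unfolding J_def using idealD(2)[OF im] subrD(1)[OF R] by blast
  qed
  ultimately have "1 \<in> J" using m a unfolding maxid_def by blast
  then obtain u t where "1 = u + t * a" "u \<in> m" "t \<in> R" unfolding J_def by auto
  then have "t * a - 1 = - u" by (simp add: algebra_simps)
  then have "t * a - 1 \<in> m" using ideal_neg[OF R im \<open>u \<in> m\<close>] by simp
  then show ?thesis using \<open>t \<in> R\<close> by blast
qed

lemma max_prime:
  assumes R: "subr R" and m: "maxid R m" and ab: "a \<in> R" "b \<in> R" "a * b \<in> m"
  shows "a \<in> m \<or> b \<in> m"
proof (cases "a \<in> m")
  case False
  then obtain s where s: "s \<in> R" "s * a - 1 \<in> m" using max_inv[OF R m ab(1)] by blast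
  have im: "isideal R m" using m by (simp add: maxid_def)
  have 1: "s * (a * b) \<in> m" using idealD(4)[OF im ab(3) s(1)] .
  have 2: "(s * a - 1) * b \<in> m" using idealD(5)[OF im s(2) ab(2)] .
  have "b = s * (a * b) - (s * a - 1) * b" by (simp add: algebra_simps)
  also have "\<dots> \<in> m" using ideal_diff[OF R im 1 2] .
  finally show ?thesis by simp
qed simp

lemma exists_max:
  assumes R: "subr R" and I: "isideal R I" "1 \<notin> I"
  shows "\<exists>m. maxid R m \<and> I \<subseteq> m"
proof -
  define \<A> where "\<A> = {J. isideal R J \<and> I \<subseteq> J \<and> 1 \<notin> J}"
  have "\<exists>M\<in>\<A>. \<forall>X\<in>\<A>. M \<subseteq> X \<longrightarrow> X = M"
  proof (rule subset_Zorn_nonempty)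
    show "\<A> \<noteq> {}" using I unfolding \<A>_def by auto
  next
    fix C assume C: "C \<noteq> {}" "subset.chain \<A> C"
    then have CA: "C \<subseteq> \<A>" and ch: "\<And>x y. x \<in> C \<Longrightarrow> y \<in> C \<Longrightarrow> x \<subseteq> y \<or> y \<subseteq> x"
      by (auto simp: subset.chain_def)
    have "isideal R (\<Union>C)" unfolding isideal_def
    proof (intro conjI ballI)
      show "\<Union>C \<subseteq> R" using CA unfolding \<A>_def isideal_def by auto
      show "0 \<in> \<Union>C" using CA C(1) unfolding \<A>_def isideal_def by auto
    next
      fix a b assume "a \<in> \<Union>C" "b \<in> \<Union>C"
      then obtain X Y where "X \<in> C" "Y \<in> C" "a \<in> X" "b \<in> Y" by auto
      moreover have "isideal R X" "isideal R Y" using CA \<open>X \<in> C\<close> \<open>Y \<in> C\<close> by (auto simp: \<A>_def)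
      ultimately have "a + b \<in> X \<or> a + b \<in> Y" using ch[of X Y] idealD(3) by blast
      then show "a + b \<in> \<Union>C" using \<open>X \<in> C\<close> \<open>Y \<in> C\<close> by blast
    next
      fix a r assume "a \<in> \<Union>C" "r \<in> R"
      then obtain X where "X \<in> C" "a \<in> X" by auto
      moreover have "isideal R X" using CA \<open>X \<in> C\<close> by (auto simp: \<A>_def)
      ultimately show "r * a \<in> \<Union>C" using idealD(4) \<open>r \<in> R\<close> by blast
    qed
    moreover have "I \<subseteq> \<Union>C" using CA C(1) unfolding \<A>_def by auto
    moreover have "1 \<notin> \<Union>C" using CA unfolding \<A>_def by auto
    ultimately show "\<Union>C \<in> \<A>" unfolding \<A>_def by auto
  qed
  then obtain M where "M \<in> \<A>" "\<forall>X\<in>\<A>. M \<subseteq> X \<longrightarrow> X = M" by blast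
  then have "isideal R M" "I \<subseteq> M" "1 \<notin> M" "\<And>J. isideal R J \<Longrightarrow> M \<subseteq> J \<Longrightarrow> 1 \<notin> J \<Longrightarrow> J = M"
    unfolding \<A>_def by auto
  then show ?thesis unfolding maxid_def by blast
qed



lemma poly_in_max:
  fixes r :: "'a \<Rightarrow> 'k::alg_closed_field"
  assumes R: "subr R" and m: "maxid R m" and rR: "r \<in> R"
    and cR: "\<And>c. (\<lambda>_. c) \<in> R" and pR: "\<And>q. (\<lambda>x. poly q (r x)) \<in> R"
    and p: "p \<noteq> 0" "(\<lambda>x. poly p (r x)) \<in> m"
  shows "\<exists>e. r - (\<lambda>_. e) \<in> m"
  using p
proof (induct "degree p" arbitrary: p rule: less_induct)
  case (less p)
  have im: "isideal R m" using m by (simp add: maxid_def)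
  show ?case
  proof (cases "degree p = 0")
    case True
    then obtain c where pc: "p = [:c:]" by (metis degree_eq_zeroE)
    with less have c: "c \<noteq> 0" by auto
    have "(\<lambda>x. poly p (r x)) = (\<lambda>_. c)" using pc by simp
    with less have "(\<lambda>_. c) \<in> m" by simp
    then have "(\<lambda>_. 1 / c) * (\<lambda>_. c) \<in> m" using idealD(4)[OF im _ cR] by blast
    moreover have "(\<lambda>_. 1 / c) * (\<lambda>_. c) = (1 :: 'a \<Rightarrow> 'k)" using c by (simp add: fun_eq_iff)
    ultimately have "1 \<in> m" by simp
    with m show ?thesis by (simp add: maxid_def)
  next
    case False
    then obtain e where e: "poly p e = 0" using alg_closed_imp_poly_has_root by blast
    then have "[:-e, 1:] dvd p" by (simp add: poly_eq_0_iff_dvd)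
    then obtain q where q: "p = [:-e, 1:] * q" by (elim dvdE)
    with less have q0: "q \<noteq> 0" by auto
    have "degree p = 1 + degree q" unfolding q by (subst degree_mult_eq) (use q0 in auto)
    then have dq: "degree q < degree p" by simp
    have "(\<lambda>x. poly p (r x)) = (r - (\<lambda>_. e)) * (\<lambda>x. poly q (r x))"
      unfolding q by (simp add: fun_eq_iff algebra_simps)
    with less have "(r - (\<lambda>_. e)) * (\<lambda>x. poly q (r x)) \<in> m" by simp
    moreover have "r - (\<lambda>_. e) \<in> R" using rR cR R by (intro subrD(5)) auto
    ultimately have "r - (\<lambda>_. e) \<in> m \<or> (\<lambda>x. poly q (r x)) \<in> m"
      using max_prime[OF R m] pR by blast
    then show ?thesis
    proof
      assume "(\<lambda>x. poly q (r x)) \<in> m"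
      then show ?thesis using less(1)[OF dq q0] by blast
    qed blast
  qed
qed

definition mnm :: "'v list \<Rightarrow> ('v \<Rightarrow> 'k::comm_ring_1) \<Rightarrow> 'k" where
  "mnm vs = (\<lambda>x. prod_list (map x vs))"

lemma mnm_mult: "mnm vs * mnm ws = mnm (vs @ ws)"
  by (simp add: mnm_def fun_eq_iff)

lemma span_mult1:
  fixes q :: "('v \<Rightarrow> 'k::field) \<Rightarrow> 'k"
  assumes "q \<in> fvs.span (mnm ` lists X)" "x \<in> mnm ` lists X"
  shows "x * q \<in> fvs.span (mnm ` lists X)"
  using assms(1)
proof (induct q rule: fvs.span_induct_alt)
  case base then show ?case using fvs.span_zero by (metis mult_zero_right mult_zero_left)
next
  case (step c y z)
  have "x * (sc c y + z) = sc c (x * y) + x * z" by (simp add: sc_def fun_eq_iff algebra_simps)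
  moreover have "x * y \<in> mnm ` lists X"
  proof -
    obtain vs ws where "x = mnm vs" "vs \<in> lists X" "y = mnm ws" "ws \<in> lists X"
      using assms(2) step(1) by blast
    then show ?thesis using mnm_mult[of vs ws] by (intro image_eqI[of _ _ "vs @ ws"]) auto
  qed
  ultimately show ?case using step(2)
    by (metis fvs.span_add fvs.span_scale fvs.span_base)
qed

lemma span_mult:
  fixes q :: "('v \<Rightarrow> 'k::field) \<Rightarrow> 'k"
  assumes "p \<in> fvs.span (mnm ` lists X)" "q \<in> fvs.span (mnm ` lists X)"
  shows "p * q \<in> fvs.span (mnm ` lists X)"
  using assms(1)
proof (induct p rule: fvs.span_induct_alt)
  case base then show ?case using fvs.span_zero by (metis mult_zero_right mult_zero_left)
next
  case (step c y z)
  have "(sc c y + z) * q = sc c (y * q) + z * q" by (simp add: sc_def fun_eq_iff algebra_simps)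
  moreover have "y * q \<in> fvs.span (mnm ` lists X)" using span_mult1[OF assms(2) step(1)] .
  ultimately show ?case using step(2)
    by (metis fvs.span_add fvs.span_scale)
qed

lemma polyfun_span:
  fixes p :: "('v \<Rightarrow> 'k::field) \<Rightarrow> 'k"
  assumes "p \<in> polyfun X" shows "p \<in> fvs.span (mnm ` lists X)"
  using assms
proof (induct p rule: polyfun.induct)
  case (const c)
  have "(\<lambda>_. c) = sc c (mnm [])" by (simp add: sc_def mnm_def)
  moreover have "mnm [] \<in> mnm ` lists X" by auto
  ultimately show ?case by (metis fvs.span_base fvs.span_scale)
next
  case (var i)
  have "(\<lambda>x. x i) = mnm [i]" by (simp add: mnm_def)
  moreover have "mnm [i] \<in> mnm ` lists X" using var by auto
  ultimately show ?case by (metis fvs.span_base)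
next
  case (add p q)
  then show ?case using fvs.span_add[of p _ q] by (simp add: plus_fun_def)
next
  case (mult p q)
  then show ?case using span_mult[of p X q] by (simp add: times_fun_def)
qed



lemma all_const:
  fixes X :: "'v set" and r :: "('v \<Rightarrow> 'k::alg_closed_field) \<Rightarrow> 'k"
  assumes unc: "uncountable (UNIV :: 'k set)" and X: "countable X"
    and m: "maxid (polyfun X) m" and rR: "r \<in> polyfun X"
  shows "\<exists>e. r - (\<lambda>_. e) \<in> m"
proof (rule ccontr)
  assume H: "\<not> ?thesis"
  let ?R = "polyfun X"
  have R: "subr ?R" by (rule subr_polyfun)
  have im: "isideal ?R m" using m by (simp add: maxid_def)
  have cR: "\<And>c. (\<lambda>_. c) \<in> ?R" by (rule polyfun.const)
  have rcR: "\<And>c. r - (\<lambda>_. c) \<in> ?R" using rR by (intro polyfun_minus polyfun.const)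
  have "\<forall>c. \<exists>s\<in>?R. s * (r - (\<lambda>_. c)) - 1 \<in> m"
    using max_inv[OF R m rcR] H by blast
  then obtain s where sR: "\<And>c. s c \<in> ?R" and sm: "\<And>c. s c * (r - (\<lambda>_. c)) - 1 \<in> m"
    by metis
  have one: "1 \<notin> m" using m by (simp add: maxid_def)
  have inj: "inj s"
  proof (rule injI, rule ccontr)
    fix c d assume eq: "s c = s d" and ne: "c \<noteq> d"
    have "s c * (r - (\<lambda>_. d)) - 1 \<in> m" using sm[of d] eq by simp
    then have "(s c * (r - (\<lambda>_. c)) - 1) - (s c * (r - (\<lambda>_. d)) - 1) \<in> m"
      using ideal_diff[OF R im sm[of c]] by blast
    moreover have "(s c * (r - (\<lambda>_. c)) - 1) - (s c * (r - (\<lambda>_. d)) - 1) = s c * (\<lambda>_. d - c)"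
      by (simp add: fun_eq_iff algebra_simps)
    ultimately have "s c * (\<lambda>_. d - c) \<in> m" by simp
    then have "(\<lambda>_. 1 / (d - c)) * (s c * (\<lambda>_. d - c)) \<in> m" using idealD(4)[OF im _ cR] by blast
    moreover have "(\<lambda>_. 1 / (d - c)) * (s c * (\<lambda>_. d - c)) = s c" using ne by (simp add: fun_eq_iff)
    ultimately have tm: "s c \<in> m" by simp
    have scm: "s c * (r - (\<lambda>_. c)) \<in> m" using idealD(5)[OF im tm rcR] .
    have "s c * (r - (\<lambda>_. c)) - (s c * (r - (\<lambda>_. c)) - 1) \<in> m"
      using ideal_diff[OF R im scm sm[of c]] .
    moreover have "s c * (r - (\<lambda>_. c)) - (s c * (r - (\<lambda>_. c)) - 1) = 1" by simp
    ultimately show False using one by metis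
  qed
  define Mon :: "(('v \<Rightarrow> 'k) \<Rightarrow> 'k) set" where "Mon = mnm ` lists X"
  have cMon: "countable Mon" unfolding Mon_def using X by simp
  have "\<forall>c. \<exists>F::(('v \<Rightarrow> 'k) \<Rightarrow> 'k) set. finite F \<and> F \<subseteq> Mon \<and> s c \<in> fvs.span F"
  proof
    fix c
    have "s c \<in> fvs.span Mon" unfolding Mon_def using polyfun_span[OF sR] .
    then obtain t u where "finite t" "t \<subseteq> Mon" "s c = (\<Sum>a\<in>t. sc (u a) a)"
      unfolding fvs.span_explicit by blast
    moreover have "(\<Sum>a\<in>t. sc (u a) a) \<in> fvs.span t"
      by (intro fvs.span_sum fvs.span_scale fvs.span_base)
    ultimately show "\<exists>F::(('v \<Rightarrow> 'k) \<Rightarrow> 'k) set. finite F \<and> F \<subseteq> Mon \<and> s c \<in> fvs.span F" by auto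
  qed
  then obtain Fc where Fc: "\<And>c. finite (Fc c)" "\<And>c. Fc c \<subseteq> Mon" "\<And>c. s c \<in> fvs.span (Fc c)"
    by metis
  define FS where "FS = {F. finite F \<and> F \<subseteq> Mon}"
  have cFS: "countable FS" unfolding FS_def using countable_Collect_finite_subset[OF cMon] .
  have "\<exists>F\<in>FS. infinite {c. Fc c = F}"
  proof (rule ccontr)
    assume "\<not> ?thesis"
    then have "\<forall>F\<in>FS. countable {c. Fc c = F}" using countable_finite by blast
    then have "countable (\<Union>F\<in>FS. {c. Fc c = F})" using cFS by (intro countable_UN) auto
    moreover have "(\<Union>F\<in>FS. {c. Fc c = F}) = UNIV" using Fc unfolding FS_def by auto
    ultimately show False using unc by simp
  qed
  then obtain F0 where F0: "F0 \<in> FS" "infinite {c. Fc c = F0}" by blast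
  obtain C where C: "C \<subseteq> {c. Fc c = F0}" "finite C" "card C = Suc (card F0)"
    using infinite_arbitrarily_large[OF F0(2)] by blast
  have CS: "s ` C \<subseteq> fvs.span F0" using C(1) Fc(3) by auto
  have fF0: "finite F0" using F0(1) unfolding FS_def by auto
  have injC: "inj_on s C" using inj by (rule inj_on_subset) simp
  have cardS: "card (s ` C) = Suc (card F0)" using C(3) card_image[OF injC] by simp
  have "fvs.dependent (s ` C)"
  proof (rule ccontr)
    assume "\<not> fvs.dependent (s ` C)"
    then have "card (s ` C) \<le> card F0" using fvs.independent_span_bound[OF fF0 _ CS] by blast
    then show False using cardS by simp
  qed
  then obtain u where u: "\<exists>v\<in>s ` C. u v \<noteq> 0" "(\<Sum>v\<in>s ` C. sc (u v) v) = 0"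
    using fvs.dependent_finite[of "s ` C"] C(2) by auto
  define a where "a c = u (s c)" for c
  have sumz: "(\<Sum>c\<in>C. sc (a c) (s c)) = 0"
    using u(2) sum.reindex[OF injC, of "\<lambda>v. sc (u v) v"] by (simp add: a_def)
  obtain c0 where c0: "c0 \<in> C" "a c0 \<noteq> 0" using u(1) a_def by auto
  define P where "P = (\<Prod>d\<in>C. r - (\<lambda>_. d))"
  define Q where "Q c = (\<Prod>d\<in>C - {c}. r - (\<lambda>_. d))" for c
  have PQ: "\<And>c. c \<in> C \<Longrightarrow> P = (r - (\<lambda>_. c)) * Q c"
    unfolding P_def Q_def using C(2) by (simp add: prod.remove)
  have QR: "\<And>c. Q c \<in> ?R" unfolding Q_def by (intro polyfun_prod rcR)
  have T: "(\<Sum>c\<in>C. (\<lambda>_. a c) * Q c) \<in> m"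
  proof -
    have "(\<Sum>c\<in>C. (- ((\<lambda>_. a c) * Q c)) * (s c * (r - (\<lambda>_. c)) - 1)) + (\<Sum>c\<in>C. sc (a c) (s c)) * P
        = (\<Sum>c\<in>C. (- ((\<lambda>_. a c) * Q c)) * (s c * (r - (\<lambda>_. c)) - 1) + sc (a c) (s c) * P)"
      by (simp only: sum_distrib_right sum.distrib)
    also have "\<dots> = (\<Sum>c\<in>C. (\<lambda>_. a c) * Q c)"
    proof (rule sum.cong)
      fix c assume "c \<in> C"
      then show "(- ((\<lambda>_. a c) * Q c)) * (s c * (r - (\<lambda>_. c)) - 1) + sc (a c) (s c) * P = (\<lambda>_. a c) * Q c"
        unfolding PQ[OF \<open>c \<in> C\<close>] by (simp add: fun_eq_iff sc_def algebra_simps)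
    qed simp
    finally have eq: "(\<Sum>c\<in>C. (\<lambda>_. a c) * Q c) = (\<Sum>c\<in>C. (- ((\<lambda>_. a c) * Q c)) * (s c * (r - (\<lambda>_. c)) - 1))"
      using sumz by simp
    have "(\<Sum>c\<in>C. (- ((\<lambda>_. a c) * Q c)) * (s c * (r - (\<lambda>_. c)) - 1)) \<in> m"
    proof (rule ideal_sum[OF im])
      fix c
      have "- ((\<lambda>_. a c) * Q c) \<in> ?R" using cR QR by (intro polyfun_uminus polyfun_times)
      then show "(- ((\<lambda>_. a c) * Q c)) * (s c * (r - (\<lambda>_. c)) - 1) \<in> m"
        using idealD(4)[OF im sm] by blast
    qed
    then show ?thesis using eq by simp
  qed
  define p where "p = (\<Sum>c\<in>C. smult (a c) (\<Prod>d\<in>C - {c}. [:-d, 1:]))"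
  have Tp: "(\<Sum>c\<in>C. (\<lambda>_. a c) * Q c) = (\<lambda>x. poly p (r x))"
    unfolding p_def Q_def by (simp add: fun_eq_iff fun_sum_apply fun_prod_apply poly_sum poly_prod algebra_simps)
  have "poly p c0 \<noteq> 0"
  proof -
    have "poly p c0 = (\<Sum>c\<in>C. a c * (\<Prod>d\<in>C - {c}. c0 - d))"
      unfolding p_def by (simp add: poly_sum poly_prod algebra_simps)
    also have "\<dots> = a c0 * (\<Prod>d\<in>C - {c0}. c0 - d) + (\<Sum>c\<in>C - {c0}. a c * (\<Prod>d\<in>C - {c}. c0 - d))"
      using sum.remove[OF C(2) c0(1)] by simp
    also have "(\<Sum>c\<in>C - {c0}. a c * (\<Prod>d\<in>C - {c}. c0 - d)) = 0"
    proof (rule sum.neutral, rule ballI)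
      fix c assume "c \<in> C - {c0}"
      then have "c0 \<in> C - {c}" using c0 by auto
      then have "(\<Prod>d\<in>C - {c}. c0 - d) = 0" using C(2) by (intro prod_zero) auto
      then show "a c * (\<Prod>d\<in>C - {c}. c0 - d) = 0" by simp
    qed
    also have "a c0 * (\<Prod>d\<in>C - {c0}. c0 - d) \<noteq> 0"
      using c0(2) C(2) by (simp add: prod_zero_iff)
    ultimately show ?thesis by simp
  qed
  then have "p \<noteq> 0" by auto
  from poly_in_max[OF R m rR cR polyfun_poly[OF rR] this] T Tp have "\<exists>e. r - (\<lambda>_. e) \<in> m" by simp
  with H show False by simp
qed

lemma countable_null:
  fixes X :: "'v set" and E :: "(('v \<Rightarrow> 'k::alg_closed_field) \<Rightarrow> 'k) set"
  assumes unc: "uncountable (UNIV :: 'k set)" and X: "countable X" and E: "E \<subseteq> polyfun X"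
    and fin: "\<And>E0. finite E0 \<Longrightarrow> E0 \<subseteq> E \<Longrightarrow> \<exists>\<xi>. \<forall>f\<in>E0. f \<xi> = 0"
  shows "\<exists>\<xi>. \<forall>f\<in>E. f \<xi> = 0"
proof -
  let ?R = "polyfun X"
  have R: "subr ?R" by (rule subr_polyfun)
  define I where "I = {p \<in> ?R. \<exists>E0. finite E0 \<and> E0 \<subseteq> E \<and> (\<forall>\<xi>. (\<forall>f\<in>E0. f \<xi> = 0) \<longrightarrow> p \<xi> = 0)}"
  have iI: "isideal ?R I" unfolding isideal_def
  proof (intro conjI ballI)
    show "I \<subseteq> ?R" unfolding I_def by auto
    show "0 \<in> I" unfolding I_def using polyfun_zero by auto
  next
    fix x y assume "x \<in> I" "y \<in> I"
    then obtain E1 E2 where "x \<in> ?R" "y \<in> ?R" "finite E1" "E1 \<subseteq> E" "finite E2" "E2 \<subseteq> E"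
      "\<forall>\<xi>. (\<forall>f\<in>E1. f \<xi> = 0) \<longrightarrow> x \<xi> = 0" "\<forall>\<xi>. (\<forall>f\<in>E2. f \<xi> = 0) \<longrightarrow> y \<xi> = 0"
      unfolding I_def by blast
    then show "x + y \<in> I" unfolding I_def
      by (intro CollectI conjI polyfun_plus exI[of _ "E1 \<union> E2"]) auto
  next
    fix x t :: "('v \<Rightarrow> 'k) \<Rightarrow> 'k" assume "x \<in> I" "t \<in> ?R"
    then obtain E1 where "x \<in> ?R" "finite E1" "E1 \<subseteq> E"
      "\<forall>\<xi>. (\<forall>f\<in>E1. f \<xi> = 0) \<longrightarrow> x \<xi> = 0"
      unfolding I_def by blast
    then show "t * x \<in> I" unfolding I_def using \<open>t \<in> ?R\<close>
      by (intro CollectI conjI polyfun_times exI[of _ E1]) auto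
  qed
  have EI: "E \<subseteq> I"
  proof
    fix f assume "f \<in> E"
    then show "f \<in> I" unfolding I_def using E by (intro CollectI conjI exI[of _ "{f}"]) auto
  qed
  have "1 \<notin> I"
  proof
    assume "1 \<in> I"
    then obtain E0 where "finite E0" "E0 \<subseteq> E" "\<forall>\<xi>. (\<forall>f\<in>E0. f \<xi> = 0) \<longrightarrow> (1::('v \<Rightarrow> 'k) \<Rightarrow> 'k) \<xi> = 0"
      unfolding I_def by blast
    with fin show False by force
  qed
  then obtain m where m: "maxid ?R m" "I \<subseteq> m" using exists_max[OF R iI] by blast
  have im: "isideal ?R m" using m by (simp add: maxid_def)
  have one: "1 \<notin> m" using m by (simp add: maxid_def)
  define \<xi> where "\<xi> v = (SOME e. (\<lambda>x. x v) - (\<lambda>_. e) \<in> m)" for v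
  have \<xi>: "(\<lambda>x. x v) - (\<lambda>_. \<xi> v) \<in> m" if "v \<in> X" for v
  proof -
    have "\<exists>e. (\<lambda>x. x v) - (\<lambda>_. e) \<in> m"
      using all_const[OF unc X m(1)] polyfun.var[OF that] by blast
    then show ?thesis unfolding \<xi>_def by (rule someI_ex)
  qed
  have key: "p - (\<lambda>_. p \<xi>) \<in> m" if "p \<in> ?R" for p
    using that
  proof (induct p rule: polyfun.induct)
    case (const c)
    then show ?case using idealD(2)[OF im] by (simp add: zero_fun_def)
  next
    case (var i)
    then show ?case using \<xi>[of i] by blast
  next
    case (add p q)
    have eq: "(\<lambda>x. p x + q x) - (\<lambda>_. p \<xi> + q \<xi>) = (p - (\<lambda>_. p \<xi>)) + (q - (\<lambda>_. q \<xi>))"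
      by (simp add: fun_eq_iff)
    show ?case unfolding eq by (rule idealD(3)[OF im add(2) add(4)])
  next
    case (mult p q)
    have eq: "(\<lambda>x. p x * q x) - (\<lambda>_. p \<xi> * q \<xi>) = q * (p - (\<lambda>_. p \<xi>)) + (\<lambda>_. p \<xi>) * (q - (\<lambda>_. q \<xi>))"
      by (simp add: fun_eq_iff algebra_simps)
    have "q * (p - (\<lambda>_. p \<xi>)) \<in> m" using idealD(4)[OF im mult(2) mult(3)] .
    moreover have "(\<lambda>_. p \<xi>) * (q - (\<lambda>_. q \<xi>)) \<in> m" using idealD(4)[OF im mult(4) polyfun.const] .
    ultimately show ?case unfolding eq by (rule idealD(3)[OF im])
  qed
  show ?thesis
  proof (intro exI ballI)
    fix f assume f: "f \<in> E"
    then have fm: "f \<in> m" using EI m(2) by blast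
    have "f - (f - (\<lambda>_. f \<xi>)) \<in> m" using ideal_diff[OF R im fm key] f E by blast
    then have cm: "(\<lambda>_. f \<xi>) \<in> m" by simp
    show "f \<xi> = 0"
    proof (rule ccontr)
      assume ne: "f \<xi> \<noteq> 0"
      have "(\<lambda>_. 1 / f \<xi>) * (\<lambda>_. f \<xi>) \<in> m" using idealD(4)[OF im cm polyfun.const] .
      moreover have "(\<lambda>_. 1 / f \<xi>) * (\<lambda>_. f \<xi>) = (1 :: ('v \<Rightarrow> 'k) \<Rightarrow> 'k)" using ne by (simp add: fun_eq_iff)
      ultimately show False using one by simp
    qed
  qed
qed


lemma topspace_configs: "topspace (product_topology (\<lambda>_. discrete_topology A) UNIV) = configs A"
  by (auto simp: configs_def PiE_def extensional_def)

lemma closed_crit: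
  assumes S: "S \<subseteq> configs A"
    and H: "\<And>y. y \<in> configs A \<Longrightarrow> (\<forall>\<Omega>. finite \<Omega> \<longrightarrow> (\<exists>z\<in>S. \<forall>g\<in>\<Omega>. z g = y g)) \<Longrightarrow> y \<in> S"
  shows "closedin (product_topology (\<lambda>_. discrete_topology A) UNIV) S"
  unfolding closedin_def topspace_configs
proof (intro conjI S)
  show "openin (product_topology (\<lambda>_. discrete_topology A) UNIV) (configs A - S)"
  proof (subst openin_subopen, intro ballI)
    fix y assume y: "y \<in> configs A - S"
    have "\<not> (\<forall>\<Omega>. finite \<Omega> \<longrightarrow> (\<exists>z\<in>S. \<forall>g\<in>\<Omega>. z g = y g))" using H y by blast
    then obtain \<Omega> where \<Omega>: "finite \<Omega>" "\<And>z. z \<in> S \<Longrightarrow> \<exists>g\<in>\<Omega>. z g \<noteq> y g"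
      by blast
    define U where "U = (\<Pi>\<^sub>E g\<in>UNIV. if g \<in> \<Omega> then {y g} else A)"
    have "openin (product_topology (\<lambda>_. discrete_topology A) UNIV) U"
      unfolding U_def
    proof (rule product_topology_basis)
      show "finite {i. (if i \<in> \<Omega> then {y i} else A) \<noteq> topspace (discrete_topology A)}"
        by (rule finite_subset[OF _ \<Omega>(1)]) auto
    qed (use y in \<open>auto simp: configs_def\<close>)
    moreover have "y \<in> U" using y unfolding U_def configs_def by auto
    moreover have "U \<subseteq> configs A - S"
    proof
      fix z assume z: "z \<in> U"
      have "z \<in> configs A" unfolding configs_def
      proof (intro CollectI allI)
        fix g
        have zg: "z g \<in> (if g \<in> \<Omega> then {y g} else A)" using z unfolding U_def PiE_iff by blast
        show "z g \<in> A" using zg y unfolding configs_def by (cases "g \<in> \<Omega>") auto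
      qed
      moreover have "z \<notin> S"
      proof
        assume "z \<in> S"
        then obtain g where g: "g \<in> \<Omega>" "z g \<noteq> y g" using \<Omega>(2) by blast
        have "z g \<in> (if g \<in> \<Omega> then {y g} else A)" using z unfolding U_def PiE_iff by blast
        then show False using g by simp
      qed
      ultimately show "z \<in> configs A - S" by simp
    qed
    ultimately show "\<exists>T. openin (product_topology (\<lambda>_. discrete_topology A) UNIV) T \<and> y \<in> T \<and> T \<subseteq> configs A - S"
      by blast
  qed
qed

lemma sum_list_neg: "- sum_list (l :: 'a::group_add list) = sum_list (rev (map uminus l))"
  by (induct l) (auto simp: minus_add)

definition Hgen :: "'g::group_add set \<Rightarrow> 'g set" where
  "Hgen M = sum_list ` lists (M \<union> uminus ` M)"

lemma Hgen_0: "0 \<in> Hgen M" unfolding Hgen_def by (auto intro!: image_eqI[of _ _ "[]"])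

lemma Hgen_add: assumes "h \<in> Hgen M" "k \<in> Hgen M" shows "h + k \<in> Hgen M"
proof -
  obtain l1 l2 where "h = sum_list l1" "k = sum_list l2" "l1 \<in> lists (M \<union> uminus ` M)" "l2 \<in> lists (M \<union> uminus ` M)"
    using assms unfolding Hgen_def by blast
  then show ?thesis unfolding Hgen_def by (intro image_eqI[of _ _ "l1 @ l2"]) auto
qed

lemma Hgen_neg: assumes "h \<in> Hgen M" shows "- h \<in> Hgen M"
proof -
  obtain l where l: "h = sum_list l" "l \<in> lists (M \<union> uminus ` M)"
    using assms unfolding Hgen_def by blast
  have neg: "- a \<in> M \<union> uminus ` M" if a: "a \<in> M \<union> uminus ` M" for a
  proof (cases "a \<in> M")
    case True then show ?thesis by blast
  next
    case False then obtain b where "b \<in> M" "a = - b" using a by blast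
    then show ?thesis by simp
  qed
  have "rev (map uminus l) \<in> lists (M \<union> uminus ` M)"
  proof (rule in_listsI, rule ballI)
    fix x assume "x \<in> set (rev (map uminus l))"
    then obtain a where a: "a \<in> set l" "x = - a" by auto
    then have "a \<in> M \<union> uminus ` M" using l(2) by (simp add: in_lists_conv_set)
    then show "x \<in> M \<union> uminus ` M" using neg a(2) by blast
  qed
  then show ?thesis unfolding Hgen_def l(1) sum_list_neg by blast
qed

lemma Hgen_M: "m \<in> M \<Longrightarrow> m \<in> Hgen M"
  unfolding Hgen_def by (intro image_eqI[of _ _ "[m]"]) auto

lemma Hgen_countable: "finite M \<Longrightarrow> countable (Hgen M)"
  unfolding Hgen_def by (intro countable_image countable_lists countable_finite) auto

definition cos :: "'g::group_add set \<Rightarrow> 'g \<Rightarrow> 'g set" where "cos H g = (\<lambda>h. g + h) ` H"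

lemma cos_self: "g \<in> cos (Hgen M) g"
  unfolding cos_def using Hgen_0 by (intro image_eqI[of _ _ 0]) auto

lemma cos_eq: assumes "g' \<in> cos (Hgen M) g" shows "cos (Hgen M) g' = cos (Hgen M) g"
proof -
  obtain h0 where h0: "h0 \<in> Hgen M" "g' = g + h0" using assms unfolding cos_def by blast
  show ?thesis
  proof
    show "cos (Hgen M) g' \<subseteq> cos (Hgen M) g"
    proof
      fix a assume "a \<in> cos (Hgen M) g'"
      then obtain h where "h \<in> Hgen M" "a = g' + h" unfolding cos_def by blast
      then show "a \<in> cos (Hgen M) g" unfolding cos_def h0(2)
        by (intro image_eqI[of _ _ "h0 + h"] Hgen_add h0(1)) (auto simp: add.assoc)
    qed
    show "cos (Hgen M) g \<subseteq> cos (Hgen M) g'"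
    proof
      fix a assume "a \<in> cos (Hgen M) g"
      then obtain h where "h \<in> Hgen M" "a = g + h" unfolding cos_def by blast
      then show "a \<in> cos (Hgen M) g'" unfolding cos_def h0(2)
        by (intro image_eqI[of _ _ "- h0 + h"] Hgen_add Hgen_neg h0(1)) (auto simp: add.assoc)
    qed
  qed
qed

lemma cos_addM: assumes "g' \<in> cos (Hgen M) g" "m \<in> M" shows "g' + m \<in> cos (Hgen M) g"
proof -
  obtain h0 where h0: "h0 \<in> Hgen M" "g' = g + h0" using assms unfolding cos_def by blast
  have "h0 + m \<in> Hgen M" using Hgen_add[OF h0(1) Hgen_M[OF assms(2)]] .
  then show ?thesis unfolding cos_def h0(2)
    by (intro image_eqI[of _ _ "h0 + m"]) (auto simp: add.assoc)
qed

theorem theorem1p1: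
  fixes A :: "('n::finite \<Rightarrow> 'k::alg_closed_field) set"
    and \<tau> :: "('g::group_add \<Rightarrow> 'n \<Rightarrow> 'k) \<Rightarrow> ('g \<Rightarrow> 'n \<Rightarrow> 'k)"
  assumes "uncountable (UNIV :: 'k set)"
    and "affine_algebraic_set A"
    and "algebraic_ca A \<tau>"
  shows "closedin (product_topology (\<lambda>_. discrete_topology A) UNIV) (\<tau> ` configs A)"
proof -
  obtain S where S: "S \<subseteq> polyfun (UNIV::'n set)" "A = {x. \<forall>f\<in>S. f x = 0}"
    using assms(2) unfolding affine_algebraic_set_def by blast
  obtain M \<mu> where mem: "memory_local_map A \<tau> M \<mu>" and reg: "regular_local_map A M \<mu>"
    using assms(3) unfolding algebraic_ca_def by blast
  obtain P :: "'n \<Rightarrow> (('g \<times> 'n) \<Rightarrow> 'k) \<Rightarrow> 'k" where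
    P: "\<And>j. P j \<in> polyfun (M \<times> UNIV)" "\<And>y. y \<in> PiE M (\<lambda>_. A) \<Longrightarrow> \<mu> y = (\<lambda>j. P j (\<lambda>(h, i). y h i))"
    using reg unfolding regular_local_map_def by blast
  have finM: "finite M" and \<mu>A: "\<And>y. y \<in> PiE M (\<lambda>_. A) \<Longrightarrow> \<mu> y \<in> A"
    and \<tau>def: "\<And>x g. x \<in> configs A \<Longrightarrow> \<tau> x g = \<mu> (restrict (shift (- g) x) M)"
    using mem unfolding memory_local_map_def by auto
  have rA: "restrict (shift (- g) x) M \<in> PiE M (\<lambda>_. A)" if x: "x \<in> configs A" for x g
    using x by (auto simp: configs_def shift_def)
  have \<tau>P: "\<tau> x g = (\<lambda>j. P j (\<lambda>(h, i). x (g + h) i))" if x: "x \<in> configs A" for x g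
  proof -
    have "\<tau> x g = (\<lambda>j. P j (\<lambda>(h, i). restrict (shift (- g) x) M h i))"
      using \<tau>def[OF x] P(2)[OF rA[OF x]] by simp
    also have "\<dots> = (\<lambda>j. P j (\<lambda>(h, i). x (g + h) i))"
    proof (rule ext, rule polyfun_cong[OF P(1)], rule ballI)
      fix j and p :: "'g \<times> 'n" assume "p \<in> M \<times> UNIV"
      then show "(\<lambda>(h, i). restrict (shift (- g) x) M h i) p = (\<lambda>(h, i). x (g + h) i) p"
        by (auto simp: shift_def)
    qed
    finally show ?thesis .
  qed
  show ?thesis
  proof (rule closed_crit)
    show "\<tau> ` configs A \<subseteq> configs A"
      using \<tau>def \<mu>A rA by (auto simp: configs_def)
  next
    fix y assume y: "y \<in> configs A" and cl: "\<forall>\<Omega>. finite \<Omega> \<longrightarrow> (\<exists>z\<in>\<tau> ` configs A. \<forall>g\<in>\<Omega>. z g = y g)"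
    let ?H = "Hgen M"
    have sol: "\<exists>\<xi>::('g \<times> 'n) \<Rightarrow> 'k. (\<forall>g\<in>cos ?H g0. (\<lambda>i. \<xi> (g, i)) \<in> A) \<and>
        (\<forall>g\<in>cos ?H g0. \<forall>j. P j (\<lambda>(h, i). \<xi> (g + h, i)) = y g j)" for g0
    proof -
      define X where "X = cos ?H g0 \<times> (UNIV :: 'n set)"
      define e1 where "e1 = (\<lambda>(g, f::('n \<Rightarrow> 'k) \<Rightarrow> 'k). (\<lambda>\<xi>::('g \<times> 'n) \<Rightarrow> 'k. f (\<lambda>i. \<xi> (g, i))))"
      define e2 where "e2 = (\<lambda>(g, j::'n). (\<lambda>\<xi>::('g \<times> 'n) \<Rightarrow> 'k. P j (\<lambda>(h, i). \<xi> (g + h, i)) - y g j))"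
      define E1 where "E1 = e1 ` (cos ?H g0 \<times> S)"
      define E2 where "E2 = e2 ` (cos ?H g0 \<times> UNIV)"
      have cX: "countable X" unfolding X_def cos_def using Hgen_countable[OF finM] by auto
      have EX: "E1 \<union> E2 \<subseteq> polyfun X"
      proof
        fix e assume "e \<in> E1 \<union> E2"
        then show "e \<in> polyfun X"
        proof
          assume "e \<in> E1"
          then obtain g f where gf: "g \<in> cos ?H g0" "f \<in> S" "e = (\<lambda>\<xi>. f (\<lambda>i. \<xi> (g, i)))"
            unfolding E1_def e1_def by auto
          have q: "\<forall>i\<in>UNIV. (\<lambda>\<xi>. \<xi> (g, i)) \<in> polyfun X"
            using gf(1) unfolding X_def by (auto intro: polyfun.var)
          have "f \<in> polyfun UNIV" using S(1) gf(2) by blast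
          from polyfun_subst[OF this q]
          have "(\<lambda>\<xi>. f (\<lambda>i. (\<lambda>\<xi>. \<xi> (g, i)) \<xi>)) \<in> polyfun X" .
          then show ?thesis using gf by simp
        next
          assume "e \<in> E2"
          then obtain g j where gj: "g \<in> cos ?H g0" "e = (\<lambda>\<xi>. P j (\<lambda>(h, i). \<xi> (g + h, i)) - y g j)"
            unfolding E2_def e2_def by auto
          have q: "\<forall>p\<in>M \<times> UNIV. (\<lambda>\<xi>. \<xi> (g + fst p, snd p)) \<in> polyfun X"
          proof
            fix p :: "'g \<times> 'n" assume "p \<in> M \<times> UNIV"
            then have "(g + fst p, snd p) \<in> X" unfolding X_def using cos_addM[OF gj(1)] by auto
            then show "(\<lambda>\<xi>. \<xi> (g + fst p, snd p)) \<in> polyfun X" by (rule polyfun.var)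
          qed
          from polyfun_subst[OF P(1) q]
          have "(\<lambda>\<xi>. P j (\<lambda>p. (\<lambda>\<xi>. \<xi> (g + fst p, snd p)) \<xi>)) \<in> polyfun X" .
          then have "(\<lambda>\<xi>. P j (\<lambda>p. \<xi> (g + fst p, snd p)) + (- y g j)) \<in> polyfun X"
            by (intro polyfun.add polyfun.const) simp
          moreover have "(\<lambda>\<xi>. P j (\<lambda>p. \<xi> (g + fst p, snd p)) + (- y g j)) = e"
            using gj by (simp add: case_prod_unfold fun_eq_iff)
          ultimately show ?thesis by simp
        qed
      qed
      have "\<exists>\<xi>. \<forall>f\<in>E1 \<union> E2. f \<xi> = 0"
      proof (rule countable_null[OF assms(1) cX EX])
        fix E0 assume E0: "finite E0" "E0 \<subseteq> E1 \<union> E2"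
        have "E0 \<inter> E2 \<subseteq> e2 ` (cos ?H g0 \<times> UNIV)" unfolding E2_def by blast
        moreover have "finite (E0 \<inter> E2)" using E0(1) by simp
        ultimately obtain D where D: "D \<subseteq> cos ?H g0 \<times> UNIV" "finite D" "E0 \<inter> E2 = e2 ` D"
          using finite_subset_image[of "E0 \<inter> E2" e2 "cos ?H g0 \<times> UNIV"] by metis
        have "finite (fst ` D)" using D(2) by simp
        then have "\<exists>z\<in>\<tau> ` configs A. \<forall>g\<in>fst ` D. z g = y g" by (rule cl[rule_format])
        then obtain z where z: "z \<in> \<tau> ` configs A" "\<forall>g\<in>fst ` D. z g = y g" by blast
        then obtain x where x: "x \<in> configs A" "z = \<tau> x" by blast
        show "\<exists>\<xi>. \<forall>f\<in>E0. f \<xi> = 0"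
        proof (intro exI ballI)
          fix f assume f: "f \<in> E0"
          show "f (\<lambda>p. x (fst p) (snd p)) = 0"
          proof (cases "f \<in> E2")
            case True
            then have "f \<in> e2 ` D" using f D(3) by blast
            then obtain g j where gj: "(g, j) \<in> D" "f = e2 (g, j)" by auto
            have "\<tau> x g = y g" using z x gj(1) by force
            then have "P j (\<lambda>(h, i). x (g + h) i) = y g j" using \<tau>P[OF x(1), of g] by (metis fun_cong)
            then show ?thesis using gj(2) by (simp add: e2_def case_prod_unfold)
          next
            case False
            then have "f \<in> E1" using f E0(2) by blast
            then obtain g f' where gf: "f' \<in> S" "f = e1 (g, f')" unfolding E1_def by auto
            have "x g \<in> A" using x(1) by (simp add: configs_def)
            then have "f' (x g) = 0" using S(2) gf(1) by blast
            then show ?thesis using gf(2) by (simp add: e1_def)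
          qed
        qed
      qed
      then obtain \<xi> where \<xi>: "\<And>f. f \<in> E1 \<union> E2 \<Longrightarrow> f \<xi> = 0" by blast
      show ?thesis
      proof (intro exI conjI ballI allI)
        fix g assume g: "g \<in> cos ?H g0"
        show "(\<lambda>i. \<xi> (g, i)) \<in> A"
        proof -
          have "\<forall>f\<in>S. f (\<lambda>i. \<xi> (g, i)) = 0"
          proof
            fix f assume "f \<in> S"
            then have "e1 (g, f) \<in> E1" using g unfolding E1_def by blast
            then have "e1 (g, f) \<xi> = 0" using \<xi> by blast
            then show "f (\<lambda>i. \<xi> (g, i)) = 0" by (simp add: e1_def)
          qed
          then show ?thesis using S(2) by blast
        qed
      next
        fix g j assume g: "g \<in> cos ?H g0"
        then have "e2 (g, j) \<in> E2" unfolding E2_def by blast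
        then have "e2 (g, j) \<xi> = 0" using \<xi> by blast
        then show "P j (\<lambda>(h, i). \<xi> (g + h, i)) = y g j" by (simp add: e2_def)
      qed
    qed
    then obtain xs where xs: "\<And>g0 g. g \<in> cos ?H g0 \<Longrightarrow> (\<lambda>i. xs g0 (g, i)) \<in> A"
      "\<And>g0 g j. g \<in> cos ?H g0 \<Longrightarrow> P j (\<lambda>(h, i). xs g0 (g + h, i)) = y g j"
      by metis
    define rep where "rep g = (SOME g0. g0 \<in> cos ?H g)" for g
    have rep: "rep g \<in> cos ?H g" for g unfolding rep_def using cos_self by (rule someI)
    have grep: "g \<in> cos ?H (rep g)" for g using cos_eq[OF rep[of g]] cos_self by blast
    have repM: "rep (g + m) = rep g" if "m \<in> M" for g m
    proof -
      have "cos ?H (g + m) = cos ?H g" using cos_eq cos_addM[OF cos_self that] by blast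
      then show ?thesis unfolding rep_def by simp
    qed
    define x where "x g = (\<lambda>i. xs (rep g) (g, i))" for g
    have xA: "x \<in> configs A" unfolding configs_def x_def using xs(1)[OF grep] by blast
    have "\<tau> x = y"
    proof
      fix g
      have "\<tau> x g = (\<lambda>j. P j (\<lambda>(h, i). x (g + h) i))" by (rule \<tau>P[OF xA])
      also have "\<dots> = (\<lambda>j. P j (\<lambda>(h, i). xs (rep g) (g + h, i)))"
      proof (rule ext, rule polyfun_cong[OF P(1)], rule ballI)
        fix j and p :: "'g \<times> 'n" assume "p \<in> M \<times> UNIV"
        then show "(\<lambda>(h, i). x (g + h) i) p = (\<lambda>(h, i). xs (rep g) (g + h, i)) p"
          by (auto simp: x_def repM)
      qed
      also have "\<dots> = y g" using xs(2)[OF grep] by (simp add: fun_eq_iff)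
      finally show "\<tau> x g = y g" .
    qed
    then show "y \<in> \<tau> ` configs A" using xA by blast
  qed
qed


end
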